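(* Let $\omega,\gamma_+,\gamma_-,\gamma_z\in\mathbb{R}$ and let $\mathcal{L}^\ddagger:\mathcal{M}_2\to\mathcal{M}_2$ be $$\mathcal{L}^\ddagger(X)=\tfrac{i\omega}{2}[\sigma_z,X]+\gamma_+\Big(\sigma_-X\sigma_+-\tfrac12\{\sigma_-\sigma_+,X\}\Big)+\gamma_-\Big(\sigma_+X\sigma_--\tfrac12\{\sigma_+\sigma_-,X\}\Big)+\gamma_z(\sigma_zX\sigma_z-X).$$ Then $\mathcal{L}^\ddagger(X^2)-\mathcal{L}^\ddagger(X)X-X\mathcal{L}^\ddagger(X)\ge 0$ for all Hermitian $X\in\mathcal{M}_2$ if and only if $\gamma_\pm\ge 0$ and $\sqrt{\gamma_+\gamma_-}+2\gamma_z\ge 0$.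
   Context: $\sigma_x,\sigma_y,\sigma_z$ are the Pauli matrices, $\sigma_\pm=\frac12(\sigma_x\pm i\sigma_y)$, $[A,B]=AB-BA$, $\{A,B\}=AB+BA$; $\ge 0$ means positive semidefinite. *)

theory Defs
  imports "HOL-Analysis.Analysis"
begin

text \<open>2x2 complex matrices are modelled as complex^2^2; row/column indices 1, 2
  (in the type 2, with 2 = 0). Matrix product is (**).\<close>

type_synonym cmat2 = "complex^2^2"

definition cscale :: "complex \<Rightarrow> cmat2 \<Rightarrow> cmat2" where
  "cscale c M = (\<chi> i j. c * M$i$j)"

definition mat2 :: "complex \<Rightarrow> complex \<Rightarrow> complex \<Rightarrow> complex \<Rightarrow> cmat2" where
  "mat2 a b c d = (\<chi> i j. if i = 1 then (if j = 1 then a else b) else (if j = 1 then c else d))"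

definition sigma_x :: cmat2 where "sigma_x = mat2 0 1 1 0"
definition sigma_y :: cmat2 where "sigma_y = mat2 0 (- \<i>) \<i> 0"
definition sigma_z :: cmat2 where "sigma_z = mat2 1 0 0 (-1)"
definition sigma_plus :: cmat2 where "sigma_plus = cscale (1/2) (sigma_x + cscale \<i> sigma_y)"
definition sigma_minus :: cmat2 where "sigma_minus = cscale (1/2) (sigma_x - cscale \<i> sigma_y)"

definition commutator :: "cmat2 \<Rightarrow> cmat2 \<Rightarrow> cmat2" where
  "commutator A B = A ** B - B ** A"
definition anticommutator :: "cmat2 \<Rightarrow> cmat2 \<Rightarrow> cmat2" where
  "anticommutator A B = A ** B + B ** A"

definition adjoint2 :: "cmat2 \<Rightarrow> cmat2" where
  "adjoint2 A = (\<chi> i j. cnj (A$j$i))"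

definition hermitian2 :: "cmat2 \<Rightarrow> bool" where
  "hermitian2 A \<longleftrightarrow> adjoint2 A = A"

definition psd2 :: "cmat2 \<Rightarrow> bool" where
  "psd2 A \<longleftrightarrow> (\<forall>v::complex^2. let q = (\<Sum>i\<in>UNIV. \<Sum>j\<in>UNIV. cnj (v$i) * A$i$j * v$j)
                  in Im q = 0 \<and> Re q \<ge> 0)"

definition Ldag :: "real \<Rightarrow> real \<Rightarrow> real \<Rightarrow> real \<Rightarrow> cmat2 \<Rightarrow> cmat2" where
  "Ldag \<omega> gp gm gz X =
     cscale (\<i> * of_real \<omega> / 2) (commutator sigma_z X)
   + cscale (of_real gp) (sigma_minus ** X ** sigma_plus
        - cscale (1/2) (anticommutator (sigma_minus ** sigma_plus) X))
   + cscale (of_real gm) (sigma_plus ** X ** sigma_minus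
        - cscale (1/2) (anticommutator (sigma_plus ** sigma_minus) X))
   + cscale (of_real gz) (sigma_z ** X ** sigma_z - X)"

end

theory Submission imports Defs begin

lemma two_ne_one: "(2::2) \<noteq> 1" by (simp add: exhaust_2)

lemma mat2_nth [simp]:
  "mat2 a b c d $ 1 $ 1 = a" "mat2 a b c d $ 1 $ 2 = b"
  "mat2 a b c d $ 2 $ 1 = c" "mat2 a b c d $ 2 $ 2 = d"
  by (simp_all add: mat2_def two_ne_one)

lemma mat2_ext: "X = mat2 (X$1$1) (X$1$2) (X$2$1) (X$2$2)"
  by (simp add: vec_eq_iff forall_2)

lemma mat2_mult [simp]: "mat2 a b c d ** mat2 e f g h = mat2 (a*e+b*g) (a*f+b*h) (c*e+d*g) (c*f+d*h)"
  by (simp add: vec_eq_iff forall_2 matrix_matrix_mult_def sum_2)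

lemma mat2_add [simp]: "mat2 a b c d + mat2 e f g h = mat2 (a+e) (b+f) (c+g) (d+h)"
  by (simp add: vec_eq_iff forall_2)

lemma mat2_diff [simp]: "mat2 a b c d - mat2 e f g h = mat2 (a-e) (b-f) (c-g) (d-h)"
  by (simp add: vec_eq_iff forall_2)

lemma cscale_mat2 [simp]: "cscale k (mat2 a b c d) = mat2 (k*a) (k*b) (k*c) (k*d)"
  by (simp add: vec_eq_iff forall_2 cscale_def)

lemma sig_simps: "sigma_z = mat2 1 0 0 (-1)" "sigma_plus = mat2 0 1 0 0" "sigma_minus = mat2 0 0 1 0"
  by (simp_all add: sigma_z_def sigma_plus_def sigma_minus_def sigma_x_def sigma_y_def)

lemma mat2_eq_iff: "mat2 a b c d = mat2 e f g h \<longleftrightarrow> a = e \<and> b = f \<and> c = g \<and> d = h"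
  by (metis mat2_nth)

definition Mof where "Mof \<omega> gp gm gz X = Ldag \<omega> gp gm gz (X ** X) - Ldag \<omega> gp gm gz X ** X - X ** Ldag \<omega> gp gm gz X"

lemma Mof_herm:
  fixes a d gp gm gz :: real and b :: complex
  defines "t \<equiv> a - d" and "s \<equiv> (cmod b)^2" and "g \<equiv> gp + gm + 4*gz"
  shows "Mof \<omega> gp gm gz (mat2 (of_real a) b (cnj b) (of_real d)) =
     mat2 (of_real (g * s + gm*t^2)) (of_real ((gm-gp)*t) * b) (of_real ((gm-gp)*t) * cnj b) (of_real (g * s + gp*t^2))"
  unfolding Mof_def Ldag_def commutator_def anticommutator_def sig_simps
  apply (simp add: mat2_eq_iff t_def s_def g_def)
  apply (cases b)
  apply (simp add: complex_eq_iff cmod_def power2_eq_square field_simps)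
  done

lemma core:
  fixes p m gz t r x y c :: real
  assumes p: "p \<ge> 0" and m: "m \<ge> 0" and h: "sqrt (p*m) + 2*gz \<ge> 0"
    and r: "r \<ge> 0" and x: "x \<ge> 0" and y: "y \<ge> 0" and c: "\<bar>c\<bar> \<le> x*r*y"
  shows "((p+m+4*gz)*r^2 + m*t^2)*x^2 + ((p+m+4*gz)*r^2 + p*t^2)*y^2 + 2*(m-p)*t*c \<ge> 0"
proof -
  define qp where "qp = sqrt p"
  define qm where "qm = sqrt m"
  define g where "g = p+m+4*gz"
  define e where "e = \<bar>qp - qm\<bar>"
  define T where "T = \<bar>t\<bar>"
  have qpp: "qp^2 = p" "qp \<ge> 0" using p by (auto simp: qp_def)
  have qmm: "qm^2 = m" "qm \<ge> 0" using m by (auto simp: qm_def)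
  have qpm: "sqrt (p*m) = qp*qm" by (simp add: qp_def qm_def real_sqrt_mult)
  have ge: "g \<ge> e^2" using h qpm qpp qmm unfolding g_def e_def by (simp add: power2_eq_square algebra_simps)
  have e0: "e \<ge> 0" "T \<ge> 0" by (auto simp: e_def T_def)
  have tT: "t^2 = T^2" by (simp add: T_def)
  have mp: "\<bar>m - p\<bar> = e*(qp+qm)"
  proof -
    have "m - p = (qm - qp)*(qp+qm)" using qpp qmm by (simp add: power2_eq_square algebra_simps)
    then show ?thesis using qpp qmm by (simp add: e_def abs_mult abs_minus_commute)
  qed
  have h1: "(m-p)*t*c \<ge> -(e*(qp+qm)*T*(x*r*y))"
  proof -
    have "\<bar>(m-p)*t*c\<bar> = e*(qp+qm)*T*\<bar>c\<bar>" by (simp add: abs_mult mp T_def)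
    also have "\<dots> \<le> e*(qp+qm)*T*(x*r*y)" using c e0 qpp qmm by (simp add: mult_left_mono)
    finally show ?thesis by linarith
  qed
  have h2: "g*(r^2*(x^2+y^2)) \<ge> e^2*(r^2*(x^2+y^2))" using ge by (simp add: mult_right_mono)
  have h3: "e^2*(r^2*(x^2+y^2)) + m*T^2*x^2 + p*T^2*y^2 - 2*(e*(qp+qm)*T*(x*r*y))
      = (e*r*y - qm*T*x)^2 + (e*r*x - qp*T*y)^2"
    unfolding qpp(1)[symmetric] qmm(1)[symmetric] by (simp add: power2_eq_square algebra_simps)
  have h4: "(e*r*y - qm*T*x)^2 + (e*r*x - qp*T*y)^2 \<ge> 0" by simp
  have "((p+m+4*gz)*r^2 + m*t^2)*x^2 + ((p+m+4*gz)*r^2 + p*t^2)*y^2 + 2*(m-p)*t*c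
     = g*(r^2*(x^2+y^2)) + m*T^2*x^2 + p*T^2*y^2 + 2*((m-p)*t*c)"
    by (simp add: g_def tT algebra_simps)
  then show ?thesis using h1 h2 h3 h4 by linarith
qed


definition qf :: "complex \<Rightarrow> complex \<Rightarrow> complex \<Rightarrow> complex \<Rightarrow> complex \<Rightarrow> complex \<Rightarrow> complex" where
  "qf A B C D v1 v2 = cnj v1*A* v1 + cnj v1*B* v2 + cnj v2*C* v1 + cnj v2*D* v2"

lemma psd2_mat2: "psd2 (mat2 A B C D) \<longleftrightarrow> (\<forall>v1 v2. Im (qf A B C D v1 v2) = 0 \<and> Re (qf A B C D v1 v2) \<ge> 0)"
proof
  assume H: "psd2 (mat2 A B C D)"
  show "\<forall>v1 v2. Im (qf A B C D v1 v2) = 0 \<and> Re (qf A B C D v1 v2) \<ge> 0"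
  proof (intro allI)
    fix v1 v2
    define v :: "complex^2" where "v = (\<chi> i. if i = 1 then v1 else v2)"
    have "v$1 = v1" "v$2 = v2" by (simp_all add: v_def two_ne_one)
    then show "Im (qf A B C D v1 v2) = 0 \<and> Re (qf A B C D v1 v2) \<ge> 0"
      using H unfolding psd2_def Let_def sum_2 qf_def
      by (metis (no_types, lifting) add.assoc mat2_nth)
  qed
next
  assume H: "\<forall>v1 v2. Im (qf A B C D v1 v2) = 0 \<and> Re (qf A B C D v1 v2) \<ge> 0"
  show "psd2 (mat2 A B C D)"
    unfolding psd2_def Let_def sum_2
  proof
    fix v :: "complex^2"
    show "Im (cnj (v $ 1) * mat2 A B C D $ 1 $ 1 * v $ 1 + cnj (v $ 1) * mat2 A B C D $ 1 $ 2 * v $ 2 +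
             (cnj (v $ 2) * mat2 A B C D $ 2 $ 1 * v $ 1 + cnj (v $ 2) * mat2 A B C D $ 2 $ 2 * v $ 2)) = 0 \<and>
          0 \<le> Re (cnj (v $ 1) * mat2 A B C D $ 1 $ 1 * v $ 1 + cnj (v $ 1) * mat2 A B C D $ 1 $ 2 * v $ 2 +
             (cnj (v $ 2) * mat2 A B C D $ 2 $ 1 * v $ 1 + cnj (v $ 2) * mat2 A B C D $ 2 $ 2 * v $ 2))"
      using H[rule_format, of "v$1" "v$2"] by (simp add: qf_def add.assoc)
  qed
qed

lemma herm_form:
  assumes "hermitian2 X"
  shows "X = mat2 (of_real (Re (X$1$1))) (X$1$2) (cnj (X$1$2)) (of_real (Re (X$2$2)))"
proof -
  have A: "adjoint2 X = X" using assms by (simp add: hermitian2_def)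
  have e: "cnj (X$j$i) = X$i$j" for i j using arg_cong[OF A, of "\<lambda>M. M$i$j"] by (simp add: adjoint2_def)
  have "Im (X$1$1) = 0" using e[of 1 1] by (simp add: complex_eq_iff)
  moreover have "Im (X$2$2) = 0" using e[of 2 2] by (simp add: complex_eq_iff)
  ultimately show ?thesis
    by (subst mat2_ext) (simp add: mat2_eq_iff complex_eq_iff e[of 1 2, symmetric])
qed

lemma qf_herm:
  fixes A D k :: real
  shows "Im (qf (of_real A) (of_real k * b) (of_real k * cnj b) (of_real D) v1 v2) = 0"
    "Re (qf (of_real A) (of_real k * b) (of_real k * cnj b) (of_real D) v1 v2)
      = A * (cmod v1)^2 + D * (cmod v2)^2 + 2*k*Re (cnj v1 * b * v2)"
  by (cases v1; cases v2; cases b; simp add: qf_def cmod_def power2_eq_square algebra_simps)+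

lemma suff:
  assumes p: "gp \<ge> 0" and m: "gm \<ge> 0" and h: "sqrt (gp*gm) + 2*gz \<ge> 0" and X: "hermitian2 X"
  shows "psd2 (Mof \<omega> gp gm gz X)"
proof -
  define a where "a = Re (X$1$1)"
  define d where "d = Re (X$2$2)"
  define b where "b = X$1$2"
  have XX: "X = mat2 (of_real a) b (cnj b) (of_real d)" using herm_form[OF X] by (simp add: a_def b_def d_def)
  show ?thesis unfolding XX Mof_herm psd2_mat2 qf_herm
  proof (intro allI conjI)
    fix v1 v2
    have c: "\<bar>Re (cnj v1 * b * v2)\<bar> \<le> cmod v1 * cmod b * cmod v2"
      by (metis abs_Re_le_cmod complex_mod_cnj norm_mult)
    show "0 \<le> ((gp + gm + 4 * gz) * (cmod b)\<^sup>2 + gm * (a - d)\<^sup>2) * (cmod v1)\<^sup>2 +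
         ((gp + gm + 4 * gz) * (cmod b)\<^sup>2 + gp * (a - d)\<^sup>2) * (cmod v2)\<^sup>2 +
         2 * ((gm - gp) * (a - d)) * Re (cnj v1 * b * v2)"
      using core[OF p m h norm_ge_zero norm_ge_zero norm_ge_zero c, of "a-d"] by (simp only: mult.assoc)
  qed simp
qed


lemma herm_mat2: "hermitian2 (mat2 (of_real a) b (cnj b) (of_real d))"
  by (simp add: hermitian2_def adjoint2_def vec_eq_iff forall_2)

lemma nec_quad:
  fixes A B D x y :: real
  assumes "psd2 (mat2 (of_real A) (of_real B) (of_real B) (of_real D))"
  shows "A*x^2 + 2*B*x*y + D*y^2 \<ge> 0"
  using assms unfolding psd2_mat2
  apply (drule_tac x="of_real x" in spec, drule_tac x="of_real y" in spec)
  apply (simp add: qf_def power2_eq_square algebra_simps)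
  done

lemma det_cond:
  fixes A B D :: real
  assumes H: "\<And>x y. A*x^2 + 2*B*x*y + D*y^2 \<ge> 0"
  shows "A \<ge> 0 \<and> D \<ge> 0 \<and> ((A > 0 \<or> D > 0) \<longrightarrow> A*D \<ge> B^2)"
proof (intro conjI impI)
  show "A \<ge> 0" using H[of 1 0] by simp
  show "D \<ge> 0" using H[of 0 1] by simp
  assume "A > 0 \<or> D > 0"
  then show "A*D \<ge> B^2"
  proof
    assume A: "A > 0"
    have "A*(A*D - B^2) \<ge> 0" using H[of "-B" A] by (simp add: power2_eq_square algebra_simps)
    then show ?thesis using A by (simp add: zero_le_mult_iff)
  next
    assume D: "D > 0"
    have "D*(A*D - B^2) \<ge> 0" using H[of D "-B"] by (simp add: power2_eq_square algebra_simps)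
    then show ?thesis using D by (simp add: zero_le_mult_iff)
  qed
qed

lemma nec_real:
  fixes p m gz :: real
  defines "g \<equiv> p + m + 4*gz"
  assumes H: "\<And>u. u \<ge> 0 \<Longrightarrow> g*u + m \<ge> 0 \<and> g*u + p \<ge> 0 \<and>
              ((g*u + m > 0 \<or> g*u + p > 0) \<longrightarrow> (g*u+m)*(g*u+p) \<ge> (m-p)^2*u)"
  shows "p \<ge> 0 \<and> m \<ge> 0 \<and> sqrt (p*m) + 2*gz \<ge> 0"
proof -
  have p: "p \<ge> 0" and m: "m \<ge> 0" using H[of 0] by auto
  define qp where "qp = sqrt p"
  define qm where "qm = sqrt m"
  have qpp: "qp^2 = p" "qp \<ge> 0" using p by (auto simp: qp_def)
  have qmm: "qm^2 = m" "qm \<ge> 0" using m by (auto simp: qm_def)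
  have qpm: "sqrt (p*m) = qp * qm" by (simp add: qp_def qm_def real_sqrt_mult)
  have "sqrt (p*m) + 2*gz \<ge> 0"
  proof (rule ccontr)
    assume "\<not> ?thesis"
    then have lt: "g < (qp - qm)^2" using qpm qpp qmm unfolding g_def by (simp add: power2_eq_square algebra_simps)
    consider "g < 0" | "g = 0" | "g > 0" "qp * qm > 0" | "g > 0" "qp * qm = 0"
      using qpp qmm by (metis linorder_neqE_linordered_idom mult_nonneg_nonneg order_le_less)
    then show False
    proof cases
      case 1
      define u where "u = (m+1)/(-g)"
      have "u \<ge> 0" using 1 m by (simp add: u_def divide_nonneg_neg)
      moreover have "g*u + m = -1" using 1 by (simp add: u_def field_simps)
      ultimately show False using H[of u] by simp
    next
      case 2
      have pm: "p \<noteq> m" using lt 2 qpp qmm by auto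
      then have pos: "(m-p)^2 > 0" by simp
      define u where "u = (p*m+1)/(m-p)^2"
      have u0: "u \<ge> 0" using pos p m by (simp add: u_def)
      have "m > 0 \<or> p > 0" using pm p m by linarith
      then have "m*p \<ge> (m-p)^2*u" using H[OF u0] 2 by auto
      moreover have "(m-p)^2*u = p*m+1" using pos by (simp add: u_def)
      ultimately show False by (simp add: algebra_simps)
    next
      case 3
      define u where "u = qp*qm/g"
      have u0: "u \<ge> 0" using 3 by (simp add: u_def)
      have gu: "g*u = qp*qm" using 3 by (simp add: u_def)
      have "g*u + m > 0" using gu 3 qmm by (smt (verit) zero_le_power2)
      then have "(qp*qm + qm^2)*(qp*qm + qp^2) \<ge> (qm^2-qp^2)^2*u"
        using H[OF u0] gu qpp qmm by auto
      then have "g*((qp*qm + qm^2)*(qp*qm + qp^2)) \<ge> g*((qm^2-qp^2)^2*u)"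
        using 3 by (simp add: mult_left_mono)
      also have "g*((qm^2-qp^2)^2*u) = (qm^2-qp^2)^2*(qp*qm)" using gu by (simp add: algebra_simps)
      finally have "g * (qp*qm*(qp+qm)^2) \<ge> (qm-qp)^2 * (qp*qm*(qp+qm)^2)"
        by (simp add: power2_eq_square algebra_simps)
      moreover have "qp*qm*(qp+qm)^2 > 0"
      proof -
        have "qp > 0" "qm > 0" using 3 qpp(2) qmm(2) by (auto simp: zero_less_mult_iff)
        then show ?thesis by simp
      qed
      ultimately have "g \<ge> (qm-qp)^2" by (simp add: mult_le_cancel_right_pos)
      then show False using lt by (simp add: power2_commute)
    next
      case 4
      have pm0: "p*m = 0" using 4 qpp qmm by (metis power_mult_distrib zero_power2)
      have dd: "(qp - qm)^2 = p + m" using 4 qpp qmm by (simp add: power2_eq_square algebra_simps)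
      define K where "K = (p+m)*(p+m-g)"
      have K: "K > 0" using lt dd 4 by (simp add: K_def)
      define u where "u = K/(2*g^2)"
      have u0: "u > 0" using K 4 by (simp add: u_def)
      have gu: "g^2*u = K/2" using 4 by (simp add: u_def)
      have "g*u + m > 0" using 4 u0 m by (smt (verit) mult_pos_pos)
      then have hh: "(g*u+m)*(g*u+p) \<ge> (m-p)^2*u" using H[of u] u0 by auto
      have b1: "(g*u+m)*(g*u+p) - u*(g^2*u + g*(p+m)) = p*m" by (simp add: power2_eq_square algebra_simps)
      have b2: "(p+m)^2 - (m-p)^2 = 4*(p*m)" by (simp add: power2_eq_square algebra_simps)
      have a1: "(m-p)^2 = (p+m)^2" using b2 pm0 by linarith
      have a2: "(g*u+m)*(g*u+p) = u*(g^2*u + g*(p+m))" using b1 pm0 by linarith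
      have "u*(g^2*u + g*(p+m)) \<ge> u*(p+m)^2"
        using hh unfolding a1 a2 by (simp add: mult.commute)
      then have "g^2*u + g*(p+m) \<ge> (p+m)^2" using u0 by simp
      then have "K/2 + g*(p+m) \<ge> (p+m)^2" using gu by simp
      moreover have "(p+m)^2 = K + g*(p+m)" by (simp add: K_def power2_eq_square algebra_simps)
      ultimately show False using K by linarith
    qed
  qed
  then show ?thesis using p m by simp
qed


lemma nec:
  assumes H: "\<forall>X. hermitian2 X \<longrightarrow> psd2 (Mof \<omega> gp gm gz X)"
  shows "gp \<ge> 0 \<and> gm \<ge> 0 \<and> sqrt (gp * gm) + 2 * gz \<ge> 0"
proof -
  have "(gp+gm+4*gz)*u + gm \<ge> 0 \<and> (gp+gm+4*gz)*u + gp \<ge> 0 \<and>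
     (((gp+gm+4*gz)*u + gm > 0 \<or> (gp+gm+4*gz)*u + gp > 0) \<longrightarrow>
      ((gp+gm+4*gz)*u + gm)*((gp+gm+4*gz)*u + gp) \<ge> (gm-gp)^2*u)" if u0: "u \<ge> 0" for u
  proof -
    define \<beta> where "\<beta> = sqrt u"
    have bu: "\<beta>^2 = u" using u0 by (simp add: \<beta>_def)
    have "psd2 (Mof \<omega> gp gm gz (mat2 (of_real 1) (of_real \<beta>) (cnj (of_real \<beta>)) (of_real 0)))"
      using H herm_mat2 by blast
    then have "psd2 (mat2 (of_real ((gp+gm+4*gz)*u + gm)) (of_real ((gm-gp)*\<beta>)) (of_real ((gm-gp)*\<beta>))
                (of_real ((gp+gm+4*gz)*u + gp)))"
      unfolding Mof_herm by (simp add: bu[symmetric])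
    then have "((gp+gm+4*gz)*u + gm)*x^2 + 2*((gm-gp)*\<beta>)*x*y + ((gp+gm+4*gz)*u + gp)*y^2 \<ge> 0" for x y
      by (rule nec_quad)
    from det_cond[OF this] show ?thesis by (simp add: power_mult_distrib bu)
  qed
  then show ?thesis using nec_real[of gp gm gz] by blast
qed

theorem mainTheorem7:
  fixes \<omega> gp gm gz :: real
  shows "(\<forall>X. hermitian2 X \<longrightarrow>
            psd2 (Ldag \<omega> gp gm gz (X ** X) - Ldag \<omega> gp gm gz X ** X - X ** Ldag \<omega> gp gm gz X))
         \<longleftrightarrow> (gp \<ge> 0 \<and> gm \<ge> 0 \<and> sqrt (gp * gm) + 2 * gz \<ge> 0)"
  using nec[of \<omega> gp gm gz] suff[of gp gm gz _ \<omega>] unfolding Mof_def by blast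

end
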